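(* Let $n\ge 3$ and let $p\neq q$ be integers such that there is a permutation $\pi$ of $\{1,\ldots,n\}$ whose discrete derivative takes exactly the values $p$ and $q$, i.e. $\{\pi_{i+1}-\pi_i : 1\le i\le n-1\}=\{p,q\}$. Then $p$ and $q$ have opposite signs, and $p$ and $q$ are relatively prime.
   Context: For a permutation $\pi=(\pi_1,\ldots,\pi_n)$ of $\{1,\ldots,n\}$, its discrete derivative is $D(\pi)=(\pi_2-\pi_1,\ldots,\pi_n-\pi_{n-1})$. A pair $(p,q)$ of distinct integers is called a $D$-pair if for some $n\ge 1$ there is a permutation $\pi$ of $\{1,\ldots,n\}$ whose set of discrete derivative values equals $\{p,q\}$. *)

theory Defs
  imports Main
begin

definition is_perm :: "nat \<Rightarrow> (nat \<Rightarrow> int) \<Rightarrow> bool" where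
  "is_perm n pi \<longleftrightarrow> bij_betw pi {1..n} {1..int n}"

definition deriv_values :: "nat \<Rightarrow> (nat \<Rightarrow> int) \<Rightarrow> int set" where
  "deriv_values n pi = {pi (i + 1) - pi i | i. 1 \<le> i \<and> i \<le> n - 1}"

end

theory Submission
  imports Defs
begin

lemma chain_ge:
  fixes f :: "nat \<Rightarrow> int"
  assumes "\<And>i. j \<le> i \<Longrightarrow> i < k \<Longrightarrow> f (i+1) - f i \<ge> 1" and "j \<le> k"
  shows "f k - f j \<ge> int k - int j"
  using assms
proof (induction k)
  case 0 then show ?case by simp
next
  case (Suc k)
  show ?case
  proof (cases "j = Suc k")
    case True then show ?thesis by simp
  next
    case False
    then have "j \<le> k" using Suc.prems by simp
    then have "f k - f j \<ge> int k - int j" using Suc by simp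
    moreover have "f (k+1) - f k \<ge> 1" using Suc.prems \<open>j \<le> k\<close> by simp
    ultimately show ?thesis by simp
  qed
qed

lemma chain_dvd:
  fixes f :: "nat \<Rightarrow> int"
  assumes "\<And>i. 1 \<le> i \<Longrightarrow> i < k \<Longrightarrow> d dvd f (i+1) - f i" and "1 \<le> k"
  shows "d dvd f k - f 1"
  using assms
proof (induction k)
  case 0 then show ?case by simp
next
  case (Suc k)
  show ?case
  proof (cases "k = 0")
    case True then show ?thesis by simp
  next
    case False
    then have "d dvd f k - f 1" using Suc by simp
    moreover have "d dvd f (k+1) - f k" using Suc.prems False by simp
    ultimately have "d dvd (f (k+1) - f k) + (f k - f 1)" by (rule dvd_add[rotated])
    then show ?thesis by simp
  qed
qed

lemma no_mono:
  fixes f :: "nat \<Rightarrow> int"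
  assumes n: "n \<ge> 1"
    and pos: "\<And>i. 1 \<le> i \<Longrightarrow> i < n \<Longrightarrow> f (i+1) - f i \<ge> 1"
    and j0: "1 \<le> j" "j < n" "f (j+1) - f j \<ge> 2"
    and bnd: "f n - f 1 \<le> int n - 1"
  shows False
proof -
  have a: "f j - f 1 \<ge> int j - 1"
    using chain_ge[of 1 j f] pos j0 by fastforce
  have b: "f n - f (j+1) \<ge> int n - int (j+1)"
    using chain_ge[of "j+1" n f] pos j0 by fastforce
  show False using a b j0 bnd by linarith
qed

theorem lemma2p4:
  fixes n :: nat and p q :: int and pi :: "nat \<Rightarrow> int"
  assumes "n \<ge> 3"
    and "p \<noteq> q"
    and "is_perm n pi"
    and "deriv_values n pi = {p, q}"
  shows "((p < 0 \<and> 0 < q) \<or> (q < 0 \<and> 0 < p)) \<and> coprime p q"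
proof -
  have bij: "bij_betw pi {1..n} {1..int n}" using assms(3) unfolding is_perm_def .
  have inj: "inj_on pi {1..n}" using bij by (simp add: bij_betw_def)
  have img: "pi ` {1..n} = {1..int n}" using bij by (simp add: bij_betw_def)
  have rng: "\<And>i. 1 \<le> i \<Longrightarrow> i \<le> n \<Longrightarrow> 1 \<le> pi i \<and> pi i \<le> int n"
    using img by auto
  have D: "\<And>i. 1 \<le> i \<Longrightarrow> i < n \<Longrightarrow> pi (i+1) - pi i = p \<or> pi (i+1) - pi i = q"
  proof -
    fix i assume "1 \<le> i" "i < n"
    then have "pi (i+1) - pi i \<in> deriv_values n pi" unfolding deriv_values_def by force
    then show "pi (i+1) - pi i = p \<or> pi (i+1) - pi i = q" using assms(4) by auto
  qed
  have pin: "p \<in> deriv_values n pi" and qin: "q \<in> deriv_values n pi" using assms(4) by auto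
  obtain ip where ip: "1 \<le> ip" "ip < n" "pi (ip+1) - pi ip = p"
    using pin unfolding deriv_values_def using assms(1) by force
  obtain iq where iq: "1 \<le> iq" "iq < n" "pi (iq+1) - pi iq = q"
    using qin unfolding deriv_values_def using assms(1) by force
  have p0: "p \<noteq> 0"
  proof
    assume "p = 0"
    then have "pi (ip+1) = pi ip" using ip by simp
    then have "ip + 1 = ip" using inj ip by (intro inj_onD[OF inj]) auto
    then show False by simp
  qed
  have q0: "q \<noteq> 0"
  proof
    assume "q = 0"
    then have "pi (iq+1) = pi iq" using iq by simp
    then have "iq + 1 = iq" using inj iq by (intro inj_onD[OF inj]) auto
    then show False by simp
  qed
  have r1: "pi n - pi 1 \<le> int n - 1" using rng[of n] rng[of 1] assms(1) by auto
  have r2: "(- pi) n - (- pi) 1 \<le> int n - 1" using rng[of n] rng[of 1] assms(1) by auto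
  have notboth: "\<not> (p > 0 \<and> q > 0)"
  proof
    assume h: "p > 0 \<and> q > 0"
    have pos: "\<And>i. 1 \<le> i \<Longrightarrow> i < n \<Longrightarrow> pi (i+1) - pi i \<ge> 1" using D h by fastforce
    show False
    proof (cases "p \<ge> 2")
      case True
      show False using no_mono[of n pi ip] pos ip True r1 assms(1) by auto
    next
      case False
      then have "q \<ge> 2" using h assms(2) by auto
      then show False using no_mono[of n pi iq] pos iq r1 assms(1) by auto
    qed
  qed
  have notboth2: "\<not> (p < 0 \<and> q < 0)"
  proof
    assume h: "p < 0 \<and> q < 0"
    have pos: "\<And>i. 1 \<le> i \<Longrightarrow> i < n \<Longrightarrow> (- pi) (i+1) - (- pi) i \<ge> 1" using D h by fastforce
    show False
    proof (cases "p \<le> -2")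
      case True
      show False using no_mono[of n "- pi" ip] pos ip True r2 assms(1) by auto
    next
      case False
      then have "q \<le> -2" using h assms(2) by auto
      then show False using no_mono[of n "- pi" iq] pos iq r2 assms(1) by auto
    qed
  qed
  have signs: "(p < 0 \<and> 0 < q) \<or> (q < 0 \<and> 0 < p)"
    using notboth notboth2 p0 q0 by linarith
  have dv: "\<And>k. 1 \<le> k \<Longrightarrow> k \<le> n \<Longrightarrow> gcd p q dvd pi k - pi 1"
  proof -
    fix k assume k: "1 \<le> k" "k \<le> n"
    show "gcd p q dvd pi k - pi 1"
    proof (rule chain_dvd[OF _ k(1)])
      fix i assume "1 \<le> i" "i < k"
      then have "pi (i+1) - pi i = p \<or> pi (i+1) - pi i = q" using D k by simp
      then show "gcd p q dvd pi (i+1) - pi i" by auto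
    qed
  qed
  have "1 \<in> pi ` {1..n}" "2 \<in> pi ` {1..n}" using img assms(1) by auto
  then obtain a b where ab: "a \<in> {1..n}" "b \<in> {1..n}" "pi a = 1" "pi b = 2" by force
  have "gcd p q dvd (pi b - pi 1) - (pi a - pi 1)"
  proof (rule dvd_diff)
    show "gcd p q dvd pi b - pi 1" using ab(2) by (intro dv) auto
    show "gcd p q dvd pi a - pi 1" using ab(1) by (intro dv) auto
  qed
  then have "gcd p q dvd 1" using ab by simp
  then have "coprime p q" by (metis is_unit_gcd)
  then show ?thesis using signs by simp
qed

end
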